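(* Let $\rho\in\mathbb N\cup\{\infty\}$, let $D$ be a Van Kampen diagram over $X_\rho$, and let $C\subset D$ be a simply connected cluster which is not complicated. Then $\|\partial C\|_\infty\le\mathrm{length}(\partial C)$ and $\|\partial C\|_1\le 2\,\mathrm{length}(\partial C)$.
   Context: Setting. $G=\langle S\mid\mathcal R\rangle$ is a finite presentation with $S$ finite symmetric and relators of length 2 or 3. $H_1,\dots,H_n\le G$, and $S_i\subset S$ is a finite symmetric generating set of $H_i$. Truncated relative presentation. For $\rho\in\mathbb N\cup\{\infty\}$, $\tilde H_i=\langle\tilde S_i\mid$ words of length $\le\rho$ over $S_i$ trivial in $H_i\rangle$, with $\tilde S_i$ a copy of $S_i$ and natural epimorphism $p_i:\tilde H_i\to H_i$. Put $\hat S=S\sqcup\tilde H_1\sqcup\dots\sqcup\tilde H_n$, each element of $\tilde H_i$ being a letter. $X_\rho$ is the presentation of $G$ with generators $\hat S$ and relators: - $\mathcal R'$, consisting of $\mathcal R$ together with the words $\tilde s^{-1}p_i(\tilde s)$ for $\tilde s\in\tilde S_i$; - for each $i$, all words of at most 3 letters of $\tilde H_i$ with trivial product in $\tilde H_i$. Complexity. $\|s\|=1$ for $s\in S$. For $a\in\tilde H_i$, $\|a\|$ is the word length with respect to $\tilde S_i$. For paths, $\|\cdot\|_1$ and $\|\cdot\|_\infty$ are the sum and the maximum of the edge-label complexities, and $\mathrm{length}$ is the number of edges. Clusters. 2-cells have type $\mathcal R'$ or $\tilde H_i$ according to their relator. Cells of the same type $\tilde H_i$ sharing an edge are cluster-adjacent.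 A cluster is the closure of a class of the transitive closure of this relation. $\partial C$ is the union of the edges of $C$ lying in exactly one 2-cell of $C$. Complicated. A cluster $C$ is complicated if $\partial C\cap\partial D$ contains at least two edges. *)

theory Defs
  imports Main "HOL-Library.Extended_Nat"
begin

text \<open>Letters of the alphabet S-hat: a generator of S, or an element of the
  truncated group H~_i (an equivalence class of words over the copy of S_i).\<close>
datatype 's letter = Base 's | Sub nat "'s list set"

inductive weq :: "('s \<Rightarrow> 's) \<Rightarrow> 's list set \<Rightarrow> 's list \<Rightarrow> 's list \<Rightarrow> bool"
  for iv R where
  weq_refl: "weq iv R w w"
| weq_sym: "weq iv R u v \<Longrightarrow> weq iv R v u"
| weq_trans: "weq iv R u v \<Longrightarrow> weq iv R v w \<Longrightarrow> weq iv R u w"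
| weq_cancel: "weq iv R (u @ [s, iv s] @ v) (u @ v)"
| weq_rel: "r \<in> R \<Longrightarrow> weq iv R (u @ r @ v) (u @ v)"

record 's relpres =
  gens :: "'s set"
  ginv :: "'s \<Rightarrow> 's"
  rels :: "'s list set"
  nsub :: nat
  subgens :: "nat \<Rightarrow> 's set"
  trunc :: enat

definition wf_relpres :: "'s relpres \<Rightarrow> bool" where
  "wf_relpres P \<longleftrightarrow>
     finite (gens P) \<and>
     (\<forall>s\<in>gens P. ginv P s \<in> gens P \<and> ginv P (ginv P s) = s) \<and>
     finite (rels P) \<and>
     (\<forall>r\<in>rels P. set r \<subseteq> gens P \<and> (length r = 2 \<or> length r = 3)) \<and>
     (\<forall>i<nsub P. subgens P i \<subseteq> gens P \<and> finite (subgens P i) \<and>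
                 (\<forall>s\<in>subgens P i. ginv P s \<in> subgens P i))"

definition G_triv :: "'s relpres \<Rightarrow> 's list \<Rightarrow> bool" where
  "G_triv P w \<longleftrightarrow> weq (ginv P) (rels P) w []"

text \<open>Relators of H~_i: words of length at most rho over S_i that are trivial in H_i
  (equivalently in G).\<close>
definition tr_rels :: "'s relpres \<Rightarrow> nat \<Rightarrow> 's list set" where
  "tr_rels P i = {w. set w \<subseteq> subgens P i \<and> enat (length w) \<le> trunc P \<and> G_triv P w}"

definition tcl :: "'s relpres \<Rightarrow> nat \<Rightarrow> 's list \<Rightarrow> 's list set" where
  "tcl P i w = {v. set v \<subseteq> subgens P i \<and> weq (ginv P) (tr_rels P i) w v}"

definition Htil :: "'s relpres \<Rightarrow> nat \<Rightarrow> 's list set set" where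
  "Htil P i = {tcl P i w | w. set w \<subseteq> subgens P i}"

definition tinv :: "'s relpres \<Rightarrow> nat \<Rightarrow> 's list set \<Rightarrow> 's list set" where
  "tinv P i a = tcl P i (rev (map (ginv P) (SOME w. w \<in> a)))"

definition hinv :: "'s relpres \<Rightarrow> 's letter \<Rightarrow> 's letter" where
  "hinv P x = (case x of Base s \<Rightarrow> Base (ginv P s) | Sub i a \<Rightarrow> Sub i (tinv P i a))"

definition winv :: "'s relpres \<Rightarrow> 's letter list \<Rightarrow> 's letter list" where
  "winv P w = rev (map (hinv P) w)"

definition letters :: "'s relpres \<Rightarrow> 's letter set" where
  "letters P = Base ` gens P \<union> (\<Union>i<nsub P. Sub i ` Htil P i)"

definition cx :: "'s letter \<Rightarrow> nat" where
  "cx x = (case x of Base s \<Rightarrow> 1 | Sub i a \<Rightarrow> (LEAST k. \<exists>w\<in>a. length w = k))"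

text \<open>The relators R' (R together with s~^-1 p_i(s~)).\<close>
definition relsR' :: "'s relpres \<Rightarrow> 's letter list set" where
  "relsR' P = map Base ` rels P \<union>
     {[Sub i (tcl P i [ginv P s]), Base s] | i s. i < nsub P \<and> s \<in> subgens P i}"

definition Hrels :: "'s relpres \<Rightarrow> nat \<Rightarrow> 's letter list set" where
  "Hrels P i = {x. length x \<le> 3 \<and>
     (\<exists>ws. list_all2 (\<lambda>l u. set u \<subseteq> subgens P i \<and> l = Sub i (tcl P i u)) x ws
           \<and> concat ws \<in> tcl P i [])}"

definition allrels :: "'s relpres \<Rightarrow> 's letter list set" where
  "allrels P = relsR' P \<union> (\<Union>i<nsub P. Hrels P i)"

text \<open>Darts (oriented edges), edge involution alpha, vertex rotation sigma,
  a dart of the outer face, and labels (label of a dart read along its direction).\<close>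
record ('d, 's) diagram =
  darts :: "'d set"
  alpha :: "'d \<Rightarrow> 'd"
  sigma :: "'d \<Rightarrow> 'd"
  outer :: 'd
  lab :: "'d \<Rightarrow> 's letter"

definition orb :: "('d \<Rightarrow> 'd) \<Rightarrow> 'd \<Rightarrow> 'd set" where
  "orb f x = {(f ^^ k) x | k. True}"

definition phi :: "('d, 's) diagram \<Rightarrow> 'd \<Rightarrow> 'd" where
  "phi D = sigma D \<circ> alpha D"

definition vertex :: "('d, 's) diagram \<Rightarrow> 'd \<Rightarrow> 'd set" where
  "vertex D d = orb (sigma D) d"

definition head :: "('d, 's) diagram \<Rightarrow> 'd \<Rightarrow> 'd set" where
  "head D d = vertex D (alpha D d)"

definition faces :: "('d, 's) diagram \<Rightarrow> 'd set set" where
  "faces D = orb (phi D) ` darts D"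

definition inner_faces :: "('d, 's) diagram \<Rightarrow> 'd set set" where
  "inner_faces D = faces D - {orb (phi D) (outer D)}"

definition fcyc :: "('d, 's) diagram \<Rightarrow> 'd \<Rightarrow> 'd list" where
  "fcyc D d = map (\<lambda>k. (phi D ^^ k) d) [0..<card (orb (phi D) d)]"

definition bword :: "('d, 's) diagram \<Rightarrow> 'd \<Rightarrow> 's letter list" where
  "bword D d = map (lab D) (fcyc D d)"

definition reads :: "'s relpres \<Rightarrow> ('d, 's) diagram \<Rightarrow> 's letter list set \<Rightarrow> 'd set \<Rightarrow> bool" where
  "reads P D W F \<longleftrightarrow> (\<exists>d\<in>F. bword D d \<in> W \<or> winv P (bword D d) \<in> W)"

definition planar_map :: "('d, 's) diagram \<Rightarrow> bool" where
  "planar_map D \<longleftrightarrow>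
     finite (darts D) \<and> outer D \<in> darts D \<and>
     bij_betw (alpha D) (darts D) (darts D) \<and>
     (\<forall>d\<in>darts D. alpha D (alpha D d) = d \<and> alpha D d \<noteq> d) \<and>
     bij_betw (sigma D) (darts D) (darts D) \<and>
     (\<forall>d\<in>darts D. \<forall>e\<in>darts D.
        (d, e) \<in> {(x, y). y = alpha D x \<or> y = sigma D x}\<^sup>*) \<and>
     int (card (vertex D ` darts D)) - int (card (darts D) div 2)
       + int (card (faces D)) = 2"

definition van_kampen :: "'s relpres \<Rightarrow> ('d, 's) diagram \<Rightarrow> bool" where
  "van_kampen P D \<longleftrightarrow> planar_map D \<and>
     (\<forall>d\<in>darts D. lab D d \<in> letters P \<and> lab D (alpha D d) = hinv P (lab D d)) \<and>
     (\<forall>F\<in>inner_faces D. reads P D (allrels P) F)"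

definition Hcell :: "'s relpres \<Rightarrow> ('d, 's) diagram \<Rightarrow> nat \<Rightarrow> 'd set \<Rightarrow> bool" where
  "Hcell P D i F \<longleftrightarrow> F \<in> inner_faces D \<and> reads P D (Hrels P i) F"

definition cadj :: "'s relpres \<Rightarrow> ('d, 's) diagram \<Rightarrow> nat \<Rightarrow> ('d set \<times> 'd set) set" where
  "cadj P D i = {(F, F'). Hcell P D i F \<and> Hcell P D i F' \<and> (\<exists>d\<in>F. alpha D d \<in> F')}"

definition cluster :: "'s relpres \<Rightarrow> ('d, 's) diagram \<Rightarrow> 'd set set \<Rightarrow> bool" where
  "cluster P D C \<longleftrightarrow>
     (\<exists>i<nsub P. \<exists>F. Hcell P D i F \<and> C = {F'. (F, F') \<in> (cadj P D i)\<^sup>*})"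

text \<open>Boundary of a set of 2-cells: the edges lying in exactly one of its 2-cells
  (incidences counted), each represented by its dart lying in the set.\<close>
definition bd :: "('d, 's) diagram \<Rightarrow> 'd set set \<Rightarrow> 'd set" where
  "bd D C = {d \<in> darts D. d \<in> \<Union>C \<and> alpha D d \<notin> \<Union>C}"

definition complicated :: "('d, 's) diagram \<Rightarrow> 'd set set \<Rightarrow> bool" where
  "complicated D C \<longleftrightarrow> card (bd D C \<inter> bd D (inner_faces D)) \<ge> 2"

definition bd_length :: "('d, 's) diagram \<Rightarrow> 'd set set \<Rightarrow> nat" where
  "bd_length D C = card (bd D C)"

definition bd_norm1 :: "('d, 's) diagram \<Rightarrow> 'd set set \<Rightarrow> nat" where
  "bd_norm1 D C = (\<Sum>d\<in>bd D C. cx (lab D d))"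

definition bd_norm_inf :: "('d, 's) diagram \<Rightarrow> 'd set set \<Rightarrow> nat" where
  "bd_norm_inf D C = Max (insert 0 ((\<lambda>d. cx (lab D d)) ` bd D C))"

definition kdarts :: "('d, 's) diagram \<Rightarrow> 'd set set \<Rightarrow> 'd set" where
  "kdarts D C = {d \<in> darts D. d \<in> \<Union>C \<or> alpha D d \<in> \<Union>C}"

definition is_path :: "('d, 's) diagram \<Rightarrow> 'd set set \<Rightarrow> 'd list \<Rightarrow> bool" where
  "is_path D C p \<longleftrightarrow> set p \<subseteq> kdarts D C \<and>
     (\<forall>j. Suc j < length p \<longrightarrow> vertex D (p ! Suc j) = head D (p ! j))"

definition closed_path :: "('d, 's) diagram \<Rightarrow> 'd set set \<Rightarrow> 'd list \<Rightarrow> bool" where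
  "closed_path D C p \<longleftrightarrow> is_path D C p \<and>
     (p \<noteq> [] \<longrightarrow> vertex D (hd p) = head D (last p))"

definition htpy_step :: "('d, 's) diagram \<Rightarrow> 'd set set \<Rightarrow> 'd list \<Rightarrow> 'd list \<Rightarrow> bool" where
  "htpy_step D C p q \<longleftrightarrow> is_path D C p \<and> is_path D C q \<and>
     ((\<exists>u v d. d \<in> kdarts D C \<and> p = u @ v \<and> q = u @ [d, alpha D d] @ v) \<or>
      (\<exists>u v d. d \<in> \<Union>C \<and> p = u @ v \<and> q = u @ fcyc D d @ v))"

definition htpy :: "('d, 's) diagram \<Rightarrow> 'd set set \<Rightarrow> 'd list \<Rightarrow> 'd list \<Rightarrow> bool" where
  "htpy D C = (\<lambda>p q. htpy_step D C p q \<or> htpy_step D C q p)\<^sup>*\<^sup>*"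

definition simply_connected :: "('d, 's) diagram \<Rightarrow> 'd set set \<Rightarrow> bool" where
  "simply_connected D C \<longleftrightarrow> kdarts D C \<noteq> {} \<and>
     (\<forall>x\<in>vertex D ` kdarts D C. \<forall>y\<in>vertex D ` kdarts D C. x = y \<or>
        (\<exists>p. is_path D C p \<and> p \<noteq> [] \<and> vertex D (hd p) = x \<and> head D (last p) = y)) \<and>
     (\<forall>p. closed_path D C p \<longrightarrow> htpy D C p [])"

end

theory Submission
  imports Defs
begin



abbreviation inv_w :: "('s \<Rightarrow> 's) \<Rightarrow> 's list \<Rightarrow> 's list" where
  "inv_w iv w \<equiv> rev (map iv w)"

lemma weq_cong: "weq iv R u v \<Longrightarrow> weq iv R (x @ u @ y) (x @ v @ y)"
proof (induction rule: weq.induct)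
  case (weq_refl w) then show ?case by (rule weq.weq_refl)
next
  case (weq_sym u v) then show ?case by (blast intro: weq.weq_sym)
next
  case (weq_trans u v w) then show ?case by (metis weq.weq_trans)
next
  case (weq_cancel u s v)
  have "weq iv R ((x @ u) @ [s, iv s] @ (v @ y)) ((x @ u) @ (v @ y))" by (rule weq.weq_cancel)
  then show ?case by simp
next
  case (weq_rel r u v)
  have "weq iv R ((x @ u) @ r @ (v @ y)) ((x @ u) @ (v @ y))" using weq_rel by (rule weq.weq_rel)
  then show ?case by simp
qed

lemma weq_congL: "weq iv R u v \<Longrightarrow> weq iv R (x @ u) (x @ v)"
  using weq_cong[of iv R u v x "[]"] by simp
lemma weq_congR: "weq iv R u v \<Longrightarrow> weq iv R (u @ y) (v @ y)"
  using weq_cong[of iv R u v "[]" y] by simp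

lemma weq_app: "weq iv R u v \<Longrightarrow> weq iv R u' v' \<Longrightarrow> weq iv R (u @ u') (v @ v')"
  by (meson weq_congL weq_congR weq.weq_trans)

lemma weq_concat: "list_all2 (weq iv R) xs ys \<Longrightarrow> weq iv R (concat xs) (concat ys)"
  by (induction rule: list_all2_induct) (auto intro: weq_refl weq_app)

lemma weq_inv_right: "weq iv R (w @ inv_w iv w) []"
proof (induction w rule: rev_induct)
  case Nil then show ?case by (simp add: weq_refl)
next
  case (snoc x w)
  have "weq iv R (w @ [x, iv x] @ inv_w iv w) (w @ inv_w iv w)" by (rule weq_cancel)
  then show ?case using snoc weq_trans by fastforce
qed

lemma weq_inv_left:
  assumes "\<forall>s\<in>set w. iv (iv s) = s"
  shows "weq iv R (inv_w iv w @ w) []"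
  using assms
proof (induction w)
  case Nil then show ?case by (simp add: weq_refl)
next
  case (Cons x w)
  have "weq iv R (inv_w iv w @ [iv x, iv (iv x)] @ w) (inv_w iv w @ w)" by (rule weq_cancel)
  then show ?case using Cons weq_trans by fastforce
qed

lemma weq_inv_triv: "weq iv R (inv_w iv w) [] \<Longrightarrow> weq iv R w []"
proof -
  assume h: "weq iv R (inv_w iv w) []"
  have "weq iv R (w @ inv_w iv w) (w @ [])" by (rule weq_congL[OF h])
  then have "weq iv R w (w @ inv_w iv w)" by (simp add: weq_sym)
  then show ?thesis using weq_inv_right weq_trans by blast
qed

lemma weq_solve: "weq iv R (a @ r) [] \<Longrightarrow> weq iv R a (inv_w iv r)"
proof -
  assume h: "weq iv R (a @ r) []"
  have "weq iv R (a @ r @ inv_w iv r) ([] @ inv_w iv r)" using weq_congR[OF h] by simp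
  moreover have "weq iv R (a @ r @ inv_w iv r) (a @ [])" by (rule weq_congL[OF weq_inv_right])
  ultimately show ?thesis by (metis append_Nil append_Nil2 weq_sym weq_trans)
qed

lemma weq_rotate: "weq iv R (a @ b) [] \<Longrightarrow> weq iv R (b @ a) []"
proof -
  assume h: "weq iv R (a @ b) []"
  have "weq iv R (b @ (a @ b) @ inv_w iv b) (b @ [] @ inv_w iv b)" by (rule weq_cong[OF h])
  then have "weq iv R (b @ a @ b @ inv_w iv b) []"
    using weq_inv_right weq_trans by fastforce
  moreover have "weq iv R ((b @ a) @ b @ inv_w iv b) ((b @ a) @ [])" by (rule weq_congL[OF weq_inv_right])
  ultimately show ?thesis by (metis append.assoc append_Nil2 weq_sym weq_trans)
qed




lemma funpow_in: "\<forall>y\<in>A. f y \<in> A \<Longrightarrow> x \<in> A \<Longrightarrow> (f ^^ k) x \<in> A"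
  by (induction k) auto

lemma inj_funpow: "inj_on f A \<Longrightarrow> \<forall>y\<in>A. f y \<in> A \<Longrightarrow> inj_on (f ^^ k) A"
proof (induction k)
  case 0 then show ?case by simp
next
  case (Suc k)
  show ?case unfolding inj_on_def
  proof (intro ballI impI)
    fix x y assume "x \<in> A" "y \<in> A" "(f ^^ Suc k) x = (f ^^ Suc k) y"
    then have "f ((f ^^ k) x) = f ((f ^^ k) y)" by simp
    then have "(f ^^ k) x = (f ^^ k) y" using Suc.prems funpow_in[of A f] \<open>x\<in>A\<close> \<open>y\<in>A\<close>
      by (meson inj_onD)
    then show "x = y" using Suc \<open>x\<in>A\<close> \<open>y\<in>A\<close> by (meson inj_onD)
  qed
qed

locale perm_fin =
  fixes f :: "'a \<Rightarrow> 'a" and A :: "'a set"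
  assumes fin: "finite A" and bij: "bij_betw f A A"
begin

lemma maps: "\<forall>y\<in>A. f y \<in> A" using bij bij_betwE by blast
lemma injf: "inj_on f A" using bij bij_betw_def by blast
lemma inK: "x \<in> A \<Longrightarrow> (f ^^ k) x \<in> A" using funpow_in[OF maps] .
lemma injK: "inj_on (f ^^ k) A" using inj_funpow[OF injf maps] .

lemma period_ex: assumes "x \<in> A" shows "\<exists>m>0. (f ^^ m) x = x"
proof -
  have "\<not> inj_on (\<lambda>k. (f ^^ k) x) {..card A}"
  proof
    assume "inj_on (\<lambda>k. (f ^^ k) x) {..card A}"
    moreover have "(\<lambda>k. (f ^^ k) x) ` {..card A} \<subseteq> A" using inK assms by auto
    ultimately have "card {..card A} \<le> card A" using card_inj_on_le fin by blast
    then show False by simp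
  qed
  then obtain a b where ab: "a \<le> card A" "b \<le> card A" "a \<noteq> b" "(f ^^ a) x = (f ^^ b) x"
    unfolding inj_on_def by auto
  { fix a b assume "a < b" "(f ^^ a) x = (f ^^ b) x"
    then have "(f ^^ a) x = (f ^^ a) ((f ^^ (b - a)) x)"
      by (metis funpow_add le_add_diff_inverse less_imp_le_nat o_apply)
    then have "x = (f ^^ (b - a)) x" using injK assms inK by (meson inj_onD)
    then have "\<exists>m>0. (f ^^ m) x = x" using \<open>a<b\<close> by (intro exI[of _ "b-a"]) auto }
  note * = this
  show ?thesis
  proof (cases "a < b")
    case True then show ?thesis using ab * by blast
  next
    case False then have "b < a" using ab by simp
    then show ?thesis using ab *[of b a] by simp
  qed
qed

definition per :: "'a \<Rightarrow> nat" where "per x = (LEAST m. m > 0 \<and> (f ^^ m) x = x)"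

lemma per: assumes "x \<in> A" shows "per x > 0" "(f ^^ per x) x = x"
  using LeastI_ex[OF period_ex[OF assms]] unfolding per_def by auto

lemma per_min: "0 < m \<Longrightarrow> m < per x \<Longrightarrow> (f ^^ m) x \<noteq> x"
  unfolding per_def using not_less_Least by blast

lemma per_mult: assumes "x \<in> A" shows "(f ^^ (per x * t)) x = x"
proof (induction t)
  case 0 then show ?case by simp
next
  case (Suc t)
  have "per x * Suc t = per x * t + per x" by simp
  then have "(f ^^ (per x * Suc t)) x = (f ^^ (per x * t)) ((f ^^ per x) x)"
    by (metis funpow_add o_apply)
  then show ?case using Suc per(2)[OF assms] by simp
qed

lemma per_mod: assumes "x \<in> A" shows "(f ^^ n) x = (f ^^ (n mod per x)) x"
proof -
  have "n = n mod per x + per x * (n div per x)" by simp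
  then have "(f ^^ n) x = (f ^^ (n mod per x)) ((f ^^ (per x * (n div per x))) x)"
    by (metis funpow_add o_apply)
  then show ?thesis using per_mult[OF assms] by simp
qed

lemma distinct_iter: assumes "x \<in> A" "a < per x" "b < per x" "(f ^^ a) x = (f ^^ b) x"
  shows "a = b"
proof (rule ccontr)
  assume "a \<noteq> b"
  { fix a b assume "a < b" "b < per x" "(f ^^ a) x = (f ^^ b) x"
    then have "(f ^^ a) x = (f ^^ a) ((f ^^ (b - a)) x)"
      by (metis funpow_add le_add_diff_inverse less_imp_le_nat o_apply)
    then have "x = (f ^^ (b - a)) x" using injK assms inK by (meson inj_onD)
    moreover have "b - a < per x" "0 < b - a" using \<open>a<b\<close> \<open>b < per x\<close> by auto
    ultimately have False using per_min[of "b-a" x] by auto }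
  then show False using assms \<open>a\<noteq>b\<close> by (metis linorder_neqE_nat)
qed

lemma orb_eq: assumes "x \<in> A" shows "orb f x = (\<lambda>k. (f ^^ k) x) ` {..<per x}"
proof
  show "orb f x \<subseteq> (\<lambda>k. (f ^^ k) x) ` {..<per x}"
  proof
    fix z assume "z \<in> orb f x"
    then obtain k where "z = (f ^^ k) x" unfolding orb_def by auto
    then have "z = (f ^^ (k mod per x)) x" using per_mod[OF assms] by simp
    moreover have "k mod per x < per x" using per(1)[OF assms] by simp
    ultimately show "z \<in> (\<lambda>k. (f ^^ k) x) ` {..<per x}" by blast
  qed
  show "(\<lambda>k. (f ^^ k) x) ` {..<per x} \<subseteq> orb f x" unfolding orb_def by auto
qed

lemma card_orb: assumes "x \<in> A" shows "card (orb f x) = per x"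
proof -
  have "inj_on (\<lambda>k. (f ^^ k) x) {..<per x}"
    unfolding inj_on_def using distinct_iter[OF assms] by auto
  then show ?thesis using orb_eq[OF assms] card_image by fastforce
qed

lemma set_cyc: assumes "x \<in> A"
  shows "set (map (\<lambda>k. (f ^^ k) x) [0..<card (orb f x)]) = orb f x"
  using orb_eq[OF assms] card_orb[OF assms] by auto

lemma orb_sub: assumes "x \<in> A" shows "orb f x \<subseteq> A"
  unfolding orb_def using inK assms by auto

lemma x_in_orb: "x \<in> orb f x" unfolding orb_def by (auto intro: exI[of _ 0])

lemma orb_same: assumes "x \<in> A" "y \<in> orb f x" shows "orb f y = orb f x"
proof -
  obtain j where j: "y = (f ^^ j) x" using assms(2) unfolding orb_def by auto
  show ?thesis
  proof
    show "orb f y \<subseteq> orb f x"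
    proof
      fix z assume "z \<in> orb f y"
      then obtain k where "z = (f ^^ k) y" unfolding orb_def by auto
      then have "z = (f ^^ (k + j)) x" unfolding j by (simp add: funpow_add)
      then show "z \<in> orb f x" unfolding orb_def by blast
    qed
  next
    show "orb f x \<subseteq> orb f y"
    proof
      fix z assume "z \<in> orb f x"
      then obtain k where k: "z = (f ^^ k) x" unfolding orb_def by auto
      have p: "per x > 0" using per[OF assms(1)] by auto
      have "j \<le> per x * j" using p by simp
      then have e: "k + per x * j = (k + per x * j - j) + j" by linarith
      have "z = (f ^^ (k + per x * j)) x" unfolding k
        using per_mult[OF assms(1), of j] by (simp add: funpow_add)
      also have "\<dots> = (f ^^ (k + per x * j - j)) y" unfolding j
        by (subst e) (simp add: funpow_add)
      finally show "z \<in> orb f y" unfolding orb_def by auto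
    qed
  qed
qed

lemma per_orb: assumes "x \<in> A" "y \<in> orb f x" shows "per y = per x"
  using card_orb orb_same assms orb_sub by (metis subsetD)

lemma cyc_rotate: assumes "x \<in> A" "j < per x"
  shows "map (\<lambda>k. (f ^^ k) ((f ^^ j) x)) [0..<per x] = rotate j (map (\<lambda>k. (f ^^ k) x) [0..<per x])"
proof (rule nth_equalityI)
  show "length (map (\<lambda>k. (f ^^ k) ((f ^^ j) x)) [0..<per x]) =
    length (rotate j (map (\<lambda>k. (f ^^ k) x) [0..<per x]))" by simp
  fix i assume "i < length (map (\<lambda>k. (f ^^ k) ((f ^^ j) x)) [0..<per x])"
  then have i: "i < per x" by simp
  have "rotate j (map (\<lambda>k. (f ^^ k) x) [0..<per x]) ! i = (f ^^ ((i + j) mod per x)) x"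
    using i by (simp add: nth_rotate add.commute)
  also have "\<dots> = (f ^^ (i + j)) x" using per_mod[OF assms(1), of "i+j"] by simp
  finally show "map (\<lambda>k. (f ^^ k) ((f ^^ j) x)) [0..<per x] ! i =
      rotate j (map (\<lambda>k. (f ^^ k) x) [0..<per x]) ! i" using i by (simp add: funpow_add add.commute)
qed

end




definition rep :: "'s list set \<Rightarrow> 's list" where
  "rep a = (SOME w. w \<in> a \<and> length w = (LEAST k. \<exists>w\<in>a. length w = k))"

definition lw :: "'s letter \<Rightarrow> 's list" where
  "lw l = (case l of Base s \<Rightarrow> [] | Sub j a \<Rightarrow> rep a)"

lemma rep_in: assumes "w \<in> a" shows "rep a \<in> a" "length (rep a) = cx (Sub j a)"
proof -
  have "\<exists>w\<in>a. length w = (LEAST k. \<exists>w\<in>a. length w = k)"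
    using LeastI_ex[of "\<lambda>k. \<exists>w\<in>a. length w = k"] assms by blast
  then have "rep a \<in> a \<and> length (rep a) = (LEAST k. \<exists>w\<in>a. length w = k)"
    unfolding rep_def by (rule someI2_bex) auto
  then show "rep a \<in> a" "length (rep a) = cx (Sub j a)" by (auto simp: cx_def)
qed

lemma cx_le: "w \<in> a \<Longrightarrow> cx (Sub j a) \<le> length w"
  unfolding cx_def by (auto intro: Least_le)

locale rp =
  fixes P :: "'s relpres" and i :: nat
  assumes wf: "wf_relpres P" and inb: "i < nsub P"
begin

abbreviation "iv \<equiv> ginv P"
abbreviation "T \<equiv> tr_rels P i"
abbreviation "S \<equiv> subgens P i"
abbreviation "W \<equiv> weq (ginv P) (tr_rels P i)"

lemma S_gens: "S \<subseteq> gens P" using wf inb unfolding wf_relpres_def by auto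
lemma S_inv: "s \<in> S \<Longrightarrow> iv s \<in> S" using wf inb unfolding wf_relpres_def by auto
lemma S_invinv: "s \<in> S \<Longrightarrow> iv (iv s) = s" using wf S_gens unfolding wf_relpres_def by auto

lemma inv_S: "set w \<subseteq> S \<Longrightarrow> set (inv_w iv w) \<subseteq> S" using S_inv by auto

lemma tcl_mem: "set w \<subseteq> S \<Longrightarrow> w \<in> tcl P i w"
  unfolding tcl_def by (auto intro: weq_refl)

lemma tcl_D: "x \<in> tcl P i w \<Longrightarrow> W w x \<and> set x \<subseteq> S"
  unfolding tcl_def by auto

lemma tcl_I: "W w x \<Longrightarrow> set x \<subseteq> S \<Longrightarrow> x \<in> tcl P i w"
  unfolding tcl_def by auto

lemma Htil_D: "a \<in> Htil P i \<Longrightarrow> \<exists>w. set w \<subseteq> S \<and> a = tcl P i w"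
  unfolding Htil_def by auto

lemma Htil_ne: "a \<in> Htil P i \<Longrightarrow> \<exists>w. w \<in> a"
  using Htil_D tcl_mem by blast

lemma Htil_weq: assumes "a \<in> Htil P i" "x \<in> a" "y \<in> a" shows "W x y"
proof -
  obtain w where w: "a = tcl P i w" using Htil_D assms(1) by blast
  have "W w x" "W w y" using tcl_D assms(2,3) w by auto
  then show ?thesis using weq_sym weq_trans by metis
qed

lemma Htil_sub: "a \<in> Htil P i \<Longrightarrow> x \<in> a \<Longrightarrow> set x \<subseteq> S"
  using Htil_D tcl_D by blast

lemma Htil_close: assumes "a \<in> Htil P i" "x \<in> a" "W x y" "set y \<subseteq> S" shows "y \<in> a"
proof -
  obtain w where w: "a = tcl P i w" using Htil_D assms(1) by blast
  have "W w x" using tcl_D assms(2) w by auto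
  then have "W w y" using assms(3) weq_trans by metis
  then show ?thesis using w tcl_I assms(4) by blast
qed

lemma tcl_Htil: "set w \<subseteq> S \<Longrightarrow> tcl P i w \<in> Htil P i"
  unfolding Htil_def by auto

definition w1 :: "'s list set \<Rightarrow> 's list" where "w1 a = (SOME w. w \<in> a)"

lemma w1_in: "a \<in> Htil P i \<Longrightarrow> w1 a \<in> a"
  unfolding w1_def using Htil_ne by (rule someI_ex)

lemma tinv_eq: "tinv P i a = tcl P i (inv_w iv (w1 a))"
  unfolding tinv_def w1_def by simp

lemma w1_S: "a \<in> Htil P i \<Longrightarrow> set (inv_w iv (w1 a)) \<subseteq> S"
  using w1_in Htil_sub inv_S by metis

lemma tinv_mem: "a \<in> Htil P i \<Longrightarrow> inv_w iv (w1 a) \<in> tinv P i a"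
  unfolding tinv_eq by (rule tcl_mem[OF w1_S])

lemma tinv_Htil: "a \<in> Htil P i \<Longrightarrow> tinv P i a \<in> Htil P i"
  unfolding tinv_eq by (rule tcl_Htil[OF w1_S])

lemma rep_Htil: "a \<in> Htil P i \<Longrightarrow> rep a \<in> a"
  using Htil_ne rep_in(1) by metis

lemma rep_w1: "a \<in> Htil P i \<Longrightarrow> W (rep a) (w1 a)"
  using rep_Htil w1_in Htil_weq by metis

lemma K1: assumes "a \<in> Htil P i" shows "W (rep a @ rep (tinv P i a)) []"
proof -
  have "W (rep (tinv P i a)) (inv_w iv (w1 a))"
    using Htil_weq[OF tinv_Htil[OF assms] rep_Htil[OF tinv_Htil[OF assms]] tinv_mem[OF assms]] .
  then have "W (rep a @ rep (tinv P i a)) (w1 a @ inv_w iv (w1 a))"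
    using weq_app[OF rep_w1[OF assms]] by blast
  moreover have "W (w1 a @ inv_w iv (w1 a)) []" by (rule weq_inv_right)
  ultimately show ?thesis by (rule weq_trans)
qed

definition LW :: "'s letter list \<Rightarrow> 's list" where "LW ls = concat (map lw ls)"

lemma K2a: assumes "ls \<in> Hrels P i" shows "W (LW ls) []"
proof -
  obtain ws where ws: "list_all2 (\<lambda>l u. set u \<subseteq> S \<and> l = Sub i (tcl P i u)) ls ws"
    "concat ws \<in> tcl P i []"
    using assms unfolding Hrels_def by auto
  have "list_all2 W (map lw ls) ws"
    using ws(1)
  proof (induction rule: list_all2_induct)
    case Nil then show ?case by simp
  next
    case (Cons l ls u us)
    have "rep (tcl P i u) \<in> tcl P i u" using rep_Htil tcl_Htil Cons(1) by blast
    then have "W (lw l) u" using Cons(1) tcl_D weq_sym by (fastforce simp: lw_def)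
    then show ?case using Cons by simp
  qed
  then have "W (LW ls) (concat ws)" unfolding LW_def by (rule weq_concat)
  moreover have "W [] (concat ws)" using tcl_D ws(2) by blast
  ultimately show ?thesis by (metis weq_sym weq_trans)
qed

definition ga :: "'s letter \<Rightarrow> 's list set" where
  "ga l = (case l of Sub j a \<Rightarrow> a | Base s \<Rightarrow> {})"

lemma K2b: assumes "winv P ls \<in> Hrels P i" and "\<forall>l\<in>set ls. \<exists>a\<in>Htil P i. l = Sub i a"
  shows "W (LW ls) []"
proof -
  obtain ws where ws: "list_all2 (\<lambda>l u. set u \<subseteq> S \<and> l = Sub i (tcl P i u)) (winv P ls) ws"
    "concat ws \<in> tcl P i []"
    using assms(1) unfolding Hrels_def by auto
  define g where "g l = inv_w iv (w1 (ga l))" for l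
  have l2: "list_all2 (\<lambda>l u. set u \<subseteq> S \<and> l = Sub i (tcl P i u)) (map (hinv P) ls) (rev ws)"
    using ws(1) unfolding winv_def by (simp add: list_all2_rev1)
  have "list_all2 W (rev ws) (map g ls)"
    unfolding list_all2_conv_all_nth
  proof
    show "length (rev ws) = length (map g ls)" using l2 list_all2_lengthD by fastforce
  next
    show "\<forall>k<length (rev ws). W (rev ws ! k) (map g ls ! k)"
    proof (intro allI impI)
      fix k assume k: "k < length (rev ws)"
      have lk: "k < length ls" using k l2 list_all2_lengthD by fastforce
      have q: "set (rev ws ! k) \<subseteq> S \<and> hinv P (ls ! k) = Sub i (tcl P i (rev ws ! k))"
        using l2 lk list_all2_nthD by fastforce
      obtain a where a: "a \<in> Htil P i" "ls ! k = Sub i a" using assms(2) lk nth_mem by blast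
      have "tinv P i a = tcl P i (rev ws ! k)" using q a by (simp add: hinv_def)
      then have "g (ls ! k) \<in> tcl P i (rev ws ! k)" using tinv_mem[OF a(1)] a(2)
        by (simp add: g_def ga_def)
      then show "W (rev ws ! k) (map g ls ! k)" using tcl_D lk by simp
    qed
  qed
  then have "W (concat (rev ws)) (concat (map g ls))" by (rule weq_concat)
  hence "W (concat ws) (concat (rev (map g ls)))"
    by (metis list_all2_rev rev_rev_ident weq_concat \<open>list_all2 W (rev ws) (map g ls)\<close>)
  moreover have "concat (rev (map g ls)) = inv_w iv (concat (map (\<lambda>l. w1 (ga l)) ls))"
    unfolding g_def by (simp add: rev_concat rev_map map_concat o_def)
  moreover have "W [] (concat ws)" using tcl_D ws(2) by blast
  ultimately have "W (inv_w iv (concat (map (\<lambda>l. w1 (ga l)) ls))) []"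
    by (metis weq_sym weq_trans)
  then have h: "W (concat (map (\<lambda>l. w1 (ga l)) ls)) []" by (rule weq_inv_triv)
  have "list_all2 W (map lw ls) (map (\<lambda>l. w1 (ga l)) ls)"
    unfolding list_all2_conv_all_nth
  proof (intro conjI allI impI)
    show "length (map lw ls) = length (map (\<lambda>l. w1 (ga l)) ls)" by simp
    fix k assume "k < length (map lw ls)"
    then have lk: "k < length ls" by simp
    obtain a where a: "a \<in> Htil P i" "ls ! k = Sub i a" using assms(2) lk nth_mem by blast
    show "W (map lw ls ! k) (map (\<lambda>l. w1 (ga l)) ls ! k)"
      using rep_w1[OF a(1)] a(2) lk by (simp add: lw_def ga_def)
  qed
  then have "W (LW ls) (concat (map (\<lambda>l. w1 (ga l)) ls))" unfolding LW_def by (rule weq_concat)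
  then show ?thesis using h weq_trans by metis
qed

end



locale vk = rp +
  fixes D :: "('d, 'a) diagram" and C :: "'d set set" and F0 :: "'d set"
  assumes vk: "van_kampen P D" and F0: "Hcell P D i F0"
    and C_def: "C = {F. (F0, F) \<in> (cadj P D i)\<^sup>*}"
begin

lemma pm: "planar_map D" using vk unfolding van_kampen_def by auto
lemma fin: "finite (darts D)" using pm unfolding planar_map_def by auto
lemma abij: "bij_betw (alpha D) (darts D) (darts D)" using pm unfolding planar_map_def by auto
lemma sbij: "bij_betw (sigma D) (darts D) (darts D)" using pm unfolding planar_map_def by auto
lemma aa: "d \<in> darts D \<Longrightarrow> alpha D (alpha D d) = d" using pm unfolding planar_map_def by auto
lemma ain: "d \<in> darts D \<Longrightarrow> alpha D d \<in> darts D" using abij bij_betwE by blast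
lemma sin: "d \<in> darts D \<Longrightarrow> sigma D d \<in> darts D" using sbij bij_betwE by blast
lemma pbij: "bij_betw (phi D) (darts D) (darts D)"
  unfolding phi_def using bij_betw_trans[OF abij sbij] .

sublocale Ph: perm_fin "phi D" "darts D" using fin pbij by unfold_locales
sublocale Sg: perm_fin "sigma D" "darts D" using fin sbij by unfold_locales

lemma lab_letter: "d \<in> darts D \<Longrightarrow> lab D d \<in> letters P"
  using vk unfolding van_kampen_def by auto
lemma lab_alpha: "d \<in> darts D \<Longrightarrow> lab D (alpha D d) = hinv P (lab D d)"
  using vk unfolding van_kampen_def by auto
lemma inner_reads: "F \<in> inner_faces D \<Longrightarrow> reads P D (allrels P) F"
  using vk unfolding van_kampen_def by auto

lemma fcyc_eq: "d \<in> darts D \<Longrightarrow> fcyc D d = map (\<lambda>k. (phi D ^^ k) d) [0..<Ph.per d]"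
  unfolding fcyc_def using Ph.card_orb by simp
lemma set_fcyc: "d \<in> darts D \<Longrightarrow> set (fcyc D d) = orb (phi D) d"
  unfolding fcyc_def using Ph.set_cyc by simp

lemma face_D: "F \<in> faces D \<Longrightarrow> x \<in> F \<Longrightarrow> x \<in> darts D \<and> F = orb (phi D) x"
  unfolding faces_def using Ph.orb_same Ph.orb_sub by blast

lemma inner_faces: "F \<in> inner_faces D \<Longrightarrow> F \<in> faces D" unfolding inner_faces_def by auto

lemma face_phi: "F \<in> faces D \<Longrightarrow> x \<in> F \<Longrightarrow> phi D x \<in> F"
proof -
  assume "F \<in> faces D" "x \<in> F"
  then have "F = orb (phi D) x" using face_D by blast
  moreover have "phi D x \<in> orb (phi D) x" unfolding orb_def by (auto intro: exI[of _ 1])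
  ultimately show ?thesis by simp
qed

lemma reads_letter:
  assumes "F \<in> faces D" "reads P D Wr F" "x \<in> F"
  shows "\<exists>e\<in>F. (bword D e \<in> Wr \<and> lab D x \<in> set (bword D e)) \<or>
                (winv P (bword D e) \<in> Wr \<and> hinv P (lab D x) \<in> set (winv P (bword D e)))"
proof -
  obtain e where e: "e \<in> F" "bword D e \<in> Wr \<or> winv P (bword D e) \<in> Wr"
    using assms(2) unfolding reads_def by auto
  have "x \<in> set (fcyc D e)" using face_D[OF assms(1) e(1)] face_D[OF assms(1) assms(3)] set_fcyc Ph.x_in_orb by metis
  then have "lab D x \<in> set (bword D e)" unfolding bword_def by auto
  then show ?thesis using e unfolding winv_def by auto
qed

lemma Hrels_letter: "ls \<in> Hrels P j \<Longrightarrow> l \<in> set ls \<Longrightarrow> \<exists>a. l = Sub j a"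
  unfolding Hrels_def by (auto simp: list_all2_conv_all_nth in_set_conv_nth) 

lemma hinv_Sub: "hinv P (Sub j a) = Sub j (tinv P j a)" by (simp add: hinv_def)
lemma hinv_Base: "hinv P (Base s) = Base (ginv P s)" by (simp add: hinv_def)

lemma C_Hcell: "F \<in> C \<Longrightarrow> Hcell P D i F"
proof -
  assume "F \<in> C"
  then have "(F0, F) \<in> (cadj P D i)\<^sup>*" unfolding C_def by auto
  then show ?thesis by (induction rule: rtrancl_induct) (auto simp: F0 cadj_def)
qed

lemma C_closed: "F \<in> C \<Longrightarrow> (F, F') \<in> cadj P D i \<Longrightarrow> F' \<in> C"
  unfolding C_def by auto

lemma letter_Sub: "Sub j a \<in> letters P \<Longrightarrow> a \<in> Htil P j"
  unfolding letters_def by auto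

lemma labC: assumes "x \<in> \<Union>C" shows "\<exists>a\<in>Htil P i. lab D x = Sub i a"
proof -
  obtain F where F: "F \<in> C" "x \<in> F" using assms by auto
  have H: "F \<in> faces D" "reads P D (Hrels P i) F" using C_Hcell[OF F(1)] inner_faces
    unfolding Hcell_def by auto
  have xd: "x \<in> darts D" using face_D H(1) F(2) by blast
  obtain a where "lab D x = Sub i a"
  proof -
    from reads_letter[OF H F(2)] obtain e where
      "(bword D e \<in> Hrels P i \<and> lab D x \<in> set (bword D e)) \<or>
       (winv P (bword D e) \<in> Hrels P i \<and> hinv P (lab D x) \<in> set (winv P (bword D e)))" by blast
    then show ?thesis
    proof
      assume "bword D e \<in> Hrels P i \<and> lab D x \<in> set (bword D e)"
      then show ?thesis using Hrels_letter that by blast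
    next
      assume "winv P (bword D e) \<in> Hrels P i \<and> hinv P (lab D x) \<in> set (winv P (bword D e))"
      then obtain b where "hinv P (lab D x) = Sub i b" using Hrels_letter by blast
      then show ?thesis using that by (cases "lab D x") (auto simp: hinv_def)
    qed
  qed
  then show ?thesis using letter_Sub lab_letter[OF xd] by auto
qed

lemma labK: assumes "x \<in> kdarts D C" shows "\<exists>a\<in>Htil P i. lab D x = Sub i a"
proof (cases "x \<in> \<Union>C")
  case True then show ?thesis using labC by blast
next
  case False
  then have x: "x \<in> darts D" "alpha D x \<in> \<Union>C" using assms unfolding kdarts_def by auto
  obtain a where a: "a \<in> Htil P i" "lab D (alpha D x) = Sub i a" using labC x(2) by blast
  have "lab D x = hinv P (Sub i a)" using lab_alpha[OF ain[OF x(1)]] aa[OF x(1)] a(2) by simp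
  then show ?thesis using tinv_Htil[OF a(1)] hinv_Sub by auto
qed

end



context vk begin

abbreviation "pw p \<equiv> LW (map (lab D) p)"

lemma LW_app: "LW (xs @ ys) = LW xs @ LW ys" unfolding LW_def by simp

lemma LW_rotate: assumes "W (LW ys) []" shows "W (LW (rotate j ys)) []"
proof -
  define k where "k = j mod length ys"
  have "ys = take k ys @ drop k ys" by simp
  then have "W (LW (take k ys) @ LW (drop k ys)) []" using assms LW_app by metis
  then have "W (LW (drop k ys) @ LW (take k ys)) []" by (rule weq_rotate)
  then show ?thesis unfolding k_def rotate_drop_take LW_app .
qed

lemma face_triv: assumes "d \<in> \<Union>C" shows "W (pw (fcyc D d)) []"
proof -
  obtain F where F: "F \<in> C" "d \<in> F" using assms by auto
  have H: "F \<in> faces D" "reads P D (Hrels P i) F" using C_Hcell[OF F(1)] inner_faces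
    unfolding Hcell_def by auto
  obtain e where e: "e \<in> F" "bword D e \<in> Hrels P i \<or> winv P (bword D e) \<in> Hrels P i"
    using H(2) unfolding reads_def by auto
  have ed: "e \<in> darts D" "F = orb (phi D) e" using face_D[OF H(1) e(1)] by auto
  have hd: "W (LW (bword D e)) []"
  proof (cases "bword D e \<in> Hrels P i")
    case True then show ?thesis by (rule K2a)
  next
    case False
    then have w: "winv P (bword D e) \<in> Hrels P i" using e by auto
    have "\<forall>l\<in>set (bword D e). \<exists>a\<in>Htil P i. l = Sub i a"
    proof
      fix l assume "l \<in> set (bword D e)"
      then obtain x where x: "x \<in> set (fcyc D e)" "l = lab D x" unfolding bword_def by auto
      have "x \<in> F" using x(1) set_fcyc ed by auto
      then show "\<exists>a\<in>Htil P i. l = Sub i a" using labC F(1) x(2) by blast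
    qed
    then show ?thesis using K2b w by blast
  qed
  have "d \<in> orb (phi D) e" using F(2) ed by simp
  then obtain j where j: "j < Ph.per e" "d = (phi D ^^ j) e" using Ph.orb_eq[OF ed(1)] by auto
  have pd: "Ph.per d = Ph.per e" using Ph.per_orb ed F(2) by blast
  have dd: "d \<in> darts D" using Ph.inK ed(1) j(2) by simp
  have "fcyc D d = rotate j (fcyc D e)"
    using fcyc_eq[OF dd] fcyc_eq[OF ed(1)] pd j Ph.cyc_rotate[OF ed(1) j(1)] by simp
  then have "map (lab D) (fcyc D d) = rotate j (bword D e)" unfolding bword_def by (simp add: rotate_map)
  then show ?thesis using LW_rotate[OF hd] by simp
qed

lemma step_inv: assumes "htpy_step D C p q" shows "W (pw q) (pw p)"
proof -
  have "(\<exists>u v d. d \<in> kdarts D C \<and> p = u @ v \<and> q = u @ [d, alpha D d] @ v) \<or>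
      (\<exists>u v d. d \<in> \<Union>C \<and> p = u @ v \<and> q = u @ fcyc D d @ v)" using assms unfolding htpy_step_def by auto
  then obtain u v X where X: "p = u @ v" "q = u @ X @ v" "W (pw X) []"
  proof
    assume "\<exists>u v d. d \<in> kdarts D C \<and> p = u @ v \<and> q = u @ [d, alpha D d] @ v"
    then obtain u v d where d: "d \<in> kdarts D C" "p = u @ v" "q = u @ [d, alpha D d] @ v" by blast
    obtain a where a: "a \<in> Htil P i" "lab D d = Sub i a" using labK[OF d(1)] by blast
    have "d \<in> darts D" using d(1) unfolding kdarts_def by auto
    then have "lab D (alpha D d) = Sub i (tinv P i a)" using lab_alpha a(2) hinv_Sub by simp
    then have "pw [d, alpha D d] = rep a @ rep (tinv P i a)" using a(2) by (simp add: LW_def lw_def)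
    then have "W (pw [d, alpha D d]) []" using K1[OF a(1)] by simp
    then show ?thesis using that d by blast
  next
    assume "\<exists>u v d. d \<in> \<Union>C \<and> p = u @ v \<and> q = u @ fcyc D d @ v"
    then obtain u v d where d: "d \<in> \<Union>C" "p = u @ v" "q = u @ fcyc D d @ v" by blast
    then show ?thesis using that face_triv by blast
  qed
  have "W (pw u @ pw X @ pw v) (pw u @ [] @ pw v)" by (rule weq_cong[OF X(3)])
  then show ?thesis using X(1,2) by (simp add: LW_app)
qed

lemma htpy_inv: assumes "htpy D C p q" shows "W (pw p) (pw q)"
  using assms unfolding htpy_def
proof (induction rule: rtranclp_induct)
  case base then show ?case by (rule weq_refl)
next
  case (step y z)
  then have "W (pw y) (pw z)" using step_inv weq_sym by blast
  then show ?case using step.IH weq_trans by blast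
qed

end



context vk begin

abbreviation "BB \<equiv> bd D C"

lemma B_D: "d \<in> BB \<Longrightarrow> d \<in> darts D \<and> d \<in> \<Union>C \<and> alpha D d \<notin> \<Union>C"
  unfolding bd_def by auto

lemma B_kd: "BB \<subseteq> kdarts D C" unfolding bd_def kdarts_def by auto

lemma B_fin: "finite BB" using fin unfolding bd_def by auto

lemma UC_phi: "x \<in> \<Union>C \<Longrightarrow> phi D x \<in> \<Union>C"
  using C_Hcell face_phi inner_faces unfolding Hcell_def by blast

lemma UC_darts: "x \<in> \<Union>C \<Longrightarrow> x \<in> darts D"
  using C_Hcell face_D inner_faces unfolding Hcell_def by blast

lemma walk_in: assumes d: "d \<in> BB"
  shows "0 < j \<Longrightarrow> (\<forall>j'. 0 < j' \<and> j' < j \<longrightarrow> (sigma D ^^ j') (alpha D d) \<notin> BB)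
     \<Longrightarrow> (sigma D ^^ j) (alpha D d) \<in> \<Union>C"
proof (induction j)
  case 0 then show ?case by simp
next
  case (Suc j)
  show ?case
  proof (cases j)
    case 0
    have "sigma D (alpha D d) = phi D d" by (simp add: phi_def)
    then show ?thesis using 0 UC_phi B_D[OF d] by simp
  next
    case (Suc j0)
    then have y: "(sigma D ^^ j) (alpha D d) \<in> \<Union>C" using Suc.IH Suc.prems by auto
    have ynb: "(sigma D ^^ j) (alpha D d) \<notin> BB" using Suc.prems \<open>j = Suc j0\<close> by auto
    have yd: "(sigma D ^^ j) (alpha D d) \<in> darts D" using UC_darts y by blast
    then have "alpha D ((sigma D ^^ j) (alpha D d)) \<in> \<Union>C" using y ynb unfolding bd_def by auto
    then have "phi D (alpha D ((sigma D ^^ j) (alpha D d))) \<in> \<Union>C" by (rule UC_phi)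
    then show ?thesis using aa[OF yd] by (simp add: phi_def)
  qed
qed

lemma nxt_ex: assumes d: "d \<in> BB" shows "\<exists>k>0. (sigma D ^^ k) (alpha D d) \<in> BB"
proof (rule ccontr)
  assume n: "\<not> (\<exists>k>0. (sigma D ^^ k) (alpha D d) \<in> BB)"
  have x: "alpha D d \<in> darts D" using ain B_D d by blast
  have "(sigma D ^^ Sg.per (alpha D d)) (alpha D d) \<in> \<Union>C"
    using walk_in[OF d, of "Sg.per (alpha D d)"] Sg.per(1)[OF x] n by blast
  then show False using Sg.per(2)[OF x] B_D d by simp
qed

definition nk :: "'d \<Rightarrow> nat" where "nk d = (LEAST k. k > 0 \<and> (sigma D ^^ k) (alpha D d) \<in> BB)"
definition nxt :: "'d \<Rightarrow> 'd" where "nxt d = (sigma D ^^ nk d) (alpha D d)"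

lemma nxt: assumes d: "d \<in> BB"
  shows "nk d > 0" "nxt d \<in> BB" "\<And>j. 0 < j \<Longrightarrow> j \<le> nk d \<Longrightarrow> (sigma D ^^ j) (alpha D d) \<in> \<Union>C"
proof -
  have L: "nk d > 0 \<and> (sigma D ^^ nk d) (alpha D d) \<in> BB"
    unfolding nk_def using LeastI_ex[OF nxt_ex[OF d]] .
  then show "nk d > 0" "nxt d \<in> BB" unfolding nxt_def by auto
  fix j assume j: "0 < j" "j \<le> nk d"
  show "(sigma D ^^ j) (alpha D d) \<in> \<Union>C"
  proof (cases "j = nk d")
    case True then show ?thesis using L B_D by blast
  next
    case False
    have jl: "j < nk d" using j False by simp
    have "\<forall>j'. 0 < j' \<and> j' < j \<longrightarrow> (sigma D ^^ j') (alpha D d) \<notin> BB"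
    proof (intro allI impI)
      fix j' assume "0 < j' \<and> j' < j"
      then have "j' < nk d" using jl by simp
      then have "\<not> (0 < j' \<and> (sigma D ^^ j') (alpha D d) \<in> BB)"
        unfolding nk_def by (rule not_less_Least)
      then show "(sigma D ^^ j') (alpha D d) \<notin> BB" using \<open>0 < j' \<and> j' < j\<close> by simp
    qed
    then show ?thesis using walk_in[OF d j(1)] by blast
  qed
qed

lemma nxt_vertex: assumes d: "d \<in> BB" shows "vertex D (nxt d) = head D d"
proof -
  have x: "alpha D d \<in> darts D" using ain B_D d by blast
  have "nxt d \<in> orb (sigma D) (alpha D d)" unfolding nxt_def orb_def by blast
  then show ?thesis unfolding vertex_def head_def using Sg.orb_same[OF x] by blast
qed

lemma nxt_inj1: assumes d: "d \<in> BB" and d': "d' \<in> BB" and e: "nxt d = nxt d'"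
  and le: "nk d \<le> nk d'" shows "d = d'"
proof -
  define x where "x = alpha D d"
  define x' where "x' = alpha D d'"
  have xd: "x \<in> darts D" "x' \<in> darts D" using ain B_D d d' x_def x'_def by blast+
  have "nk d' = nk d + (nk d' - nk d)" using le by simp
  then have "(sigma D ^^ nk d') x' = (sigma D ^^ nk d) ((sigma D ^^ (nk d' - nk d)) x')"
    by (metis funpow_add o_apply)
  then have "(sigma D ^^ nk d) x = (sigma D ^^ nk d) ((sigma D ^^ (nk d' - nk d)) x')"
    using e unfolding nxt_def x_def x'_def by simp
  then have xx: "x = (sigma D ^^ (nk d' - nk d)) x'"
    using Sg.injK Sg.inK[OF xd(2)] xd(1) by (meson inj_onD)
  have "nk d' - nk d = 0"
  proof (rule ccontr)
    assume "nk d' - nk d \<noteq> 0"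
    then have "(sigma D ^^ (nk d' - nk d)) x' \<in> \<Union>C" using nxt(3)[OF d'] x'_def by simp
    then have "x \<in> \<Union>C" using xx by simp
    then show False using B_D d x_def by blast
  qed
  then have "x = x'" using xx by simp
  then show ?thesis using aa B_D d d' x_def x'_def by metis
qed

lemma nxt_inj: "inj_on nxt BB"
  unfolding inj_on_def using nxt_inj1 by (metis nat_le_linear)

lemma nxt_bij: "bij_betw nxt BB BB"
  unfolding bij_betw_def using nxt_inj endo_inj_surj[OF B_fin _ nxt_inj] nxt(2) by blast

sublocale Nx: perm_fin nxt BB using B_fin nxt_bij by unfold_locales

end



context vk begin

lemma R1: assumes a: "a \<in> Htil P i" and s: "s \<in> S" and t: "tinv P i a = tcl P i [iv s]"
  shows "cx (Sub i a) \<le> 1"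
proof -
  have "inv_w iv (w1 a) \<in> tcl P i [iv s]" using tinv_mem[OF a] t by simp
  then have h: "W [iv s] (inv_w iv (w1 a))" using tcl_D by blast
  have "W (w1 a @ [iv s, iv (iv s)] @ []) (w1 a @ [])" by (rule weq_cancel)
  then have "W (w1 a) (w1 a @ [iv s] @ [s])" using S_invinv[OF s] weq_sym by fastforce
  moreover have "W (w1 a @ [iv s] @ [s]) (w1 a @ inv_w iv (w1 a) @ [s])" by (rule weq_cong[OF h])
  moreover have "W ((w1 a @ inv_w iv (w1 a)) @ [s]) ([] @ [s])" by (rule weq_congR[OF weq_inv_right])
  ultimately have "W (w1 a) [s]" by (metis append.assoc append_Nil weq_trans)
  then have "[s] \<in> a" using Htil_close[OF a w1_in[OF a]] s by simp
  then show ?thesis using cx_le by fastforce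
qed

lemma allrels_cases: "ls \<in> allrels P \<Longrightarrow> ls \<in> relsR' P \<or> (\<exists>j<nsub P. ls \<in> Hrels P j)"
  unfolding allrels_def by auto

lemma relsR'_letter: "ls \<in> relsR' P \<Longrightarrow> Sub j b \<in> set ls \<Longrightarrow> \<exists>s\<in>subgens P j. b = tcl P j [ginv P s]"
  unfolding relsR'_def by auto

lemma cx_in: assumes d: "d \<in> BB" and nd: "d \<notin> bd D (inner_faces D)" shows "cx (lab D d) \<le> 1"
proof -
  have dD: "d \<in> darts D" "d \<in> \<Union>C" "alpha D d \<notin> \<Union>C" using B_D[OF d] by auto
  have "C \<subseteq> inner_faces D" using C_Hcell unfolding Hcell_def by auto
  then have "d \<in> \<Union>(inner_faces D)" using dD by auto
  then have "alpha D d \<in> \<Union>(inner_faces D)" using nd dD unfolding bd_def by auto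
  then obtain F' where F': "F' \<in> inner_faces D" "alpha D d \<in> F'" by auto
  obtain F where F: "F \<in> C" "d \<in> F" using dD by auto
  obtain a where a: "a \<in> Htil P i" "lab D d = Sub i a" using labC dD(2) by blast
  have la: "lab D (alpha D d) = Sub i (tinv P i a)" using lab_alpha[OF dD(1)] a(2) hinv_Sub by simp
  have ld: "hinv P (lab D (alpha D d)) = lab D d" using lab_alpha[OF ain[OF dD(1)]] aa[OF dD(1)] by simp
  have notH: False if e: "e \<in> F'" "bword D e \<in> Hrels P i \<or> winv P (bword D e) \<in> Hrels P i" for e
  proof -
    have "Hcell P D i F'" unfolding Hcell_def reads_def using F'(1) e by blast
    then have "(F, F') \<in> cadj P D i" unfolding cadj_def using C_Hcell[OF F(1)] F(2) F'(2) by blast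
    then have "F' \<in> C" using C_closed F(1) by blast
    then show False using F'(2) dD(3) by blast
  qed
  obtain e where e: "e \<in> F'" "(bword D e \<in> allrels P \<and> lab D (alpha D d) \<in> set (bword D e)) \<or>
      (winv P (bword D e) \<in> allrels P \<and> hinv P (lab D (alpha D d)) \<in> set (winv P (bword D e)))"
    using reads_letter[OF inner_faces[OF F'(1)] inner_reads[OF F'(1)] F'(2)] by blast
  show ?thesis using e(2)
  proof
    assume A: "bword D e \<in> allrels P \<and> lab D (alpha D d) \<in> set (bword D e)"
    show ?thesis using allrels_cases[OF A[THEN conjunct1]]
    proof
      assume "bword D e \<in> relsR' P"
      then obtain s where s: "s \<in> S" "tinv P i a = tcl P i [iv s]"
        using relsR'_letter A la by fastforce
      then show ?thesis using R1[OF a(1) s] a(2) by simp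
    next
      assume "\<exists>j<nsub P. bword D e \<in> Hrels P j"
      then obtain j where "bword D e \<in> Hrels P j" by blast
      then have "j = i" using Hrels_letter A la by fastforce
      then show ?thesis using notH e(1) \<open>bword D e \<in> Hrels P j\<close> by blast
    qed
  next
    assume A: "winv P (bword D e) \<in> allrels P \<and> hinv P (lab D (alpha D d)) \<in> set (winv P (bword D e))"
    then have A2: "Sub i a \<in> set (winv P (bword D e))" using ld a(2) by simp
    show ?thesis using allrels_cases[OF A[THEN conjunct1]]
    proof
      assume "winv P (bword D e) \<in> relsR' P"
      then obtain s where s: "s \<in> S" "a = tcl P i [iv s]"
        using relsR'_letter A2 by fastforce
      then have "[iv s] \<in> a" using tcl_mem S_inv by simp
      then show ?thesis using cx_le a(2) by fastforce
    next
      assume "\<exists>j<nsub P. winv P (bword D e) \<in> Hrels P j"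
      then obtain j where "winv P (bword D e) \<in> Hrels P j" by blast
      then have "j = i" using Hrels_letter A2 by fastforce
      then show ?thesis using notH e(1) \<open>winv P (bword D e) \<in> Hrels P j\<close> by blast
    qed
  qed
qed

end



context vk begin

lemma cx_out: assumes d0: "d0 \<in> BB" and oth: "\<forall>d\<in>BB - {d0}. cx (lab D d) \<le> 1"
  and sc: "simply_connected D C"
  shows "cx (lab D d0) \<le> card BB - 1"
proof -
  define m where "m = Nx.per d0"
  have m0: "m > 0" using Nx.per(1)[OF d0] m_def by simp
  define p where "p = map (\<lambda>k. (nxt ^^ k) d0) [0..<m]"
  define q where "q = map (\<lambda>k. (nxt ^^ k) d0) [1..<m]"
  have pq: "p = d0 # q" unfolding p_def q_def using m0 by (simp add: upt_conv_Cons map_Suc_upt[symmetric])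
  have pB: "set p \<subseteq> BB" unfolding p_def using Nx.inK[OF d0] by auto
  have path: "is_path D C p" unfolding is_path_def
  proof (intro conjI allI impI)
    show "set p \<subseteq> kdarts D C" using pB B_kd by blast
    fix j assume "Suc j < length p"
    then have j: "Suc j < m" unfolding p_def by simp
    have "p ! Suc j = nxt (p ! j)" unfolding p_def using j by simp
    moreover have "p ! j \<in> BB" using Nx.inK[OF d0] j unfolding p_def by simp
    ultimately show "vertex D (p ! Suc j) = head D (p ! j)" using nxt_vertex by simp
  qed
  have "last p = (nxt ^^ (m - 1)) d0" unfolding p_def using m0 by (simp add: last_map)
  moreover have "(nxt ^^ (m - 1)) d0 \<in> BB" using Nx.inK[OF d0] .
  moreover have "nxt ((nxt ^^ (m - 1)) d0) = d0"
  proof -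
    have "Suc (m - 1) = m" using m0 by simp
    then have "nxt ((nxt ^^ (m - 1)) d0) = (nxt ^^ m) d0" by (metis funpow.simps(2) o_apply)
    then show ?thesis using Nx.per(2)[OF d0] m_def by simp
  qed
  ultimately have "head D (last p) = vertex D d0" using nxt_vertex[of "(nxt ^^ (m - 1)) d0"] by simp
  then have "closed_path D C p" unfolding closed_path_def using path pq by simp
  then have "htpy D C p []" using sc unfolding simply_connected_def by blast
  then have "W (pw p) (pw [])" by (rule htpy_inv)
  then have hp: "W (lw (lab D d0) @ pw q) []" using pq by (simp add: LW_def)
  obtain a0 where a0: "a0 \<in> Htil P i" "lab D d0 = Sub i a0" using labC B_D[OF d0] by blast
  have qB: "\<forall>y\<in>set q. y \<in> BB \<and> y \<noteq> d0"
  proof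
    fix y assume "y \<in> set q"
    then obtain k where k: "1 \<le> k" "k < m" "y = (nxt ^^ k) d0" unfolding q_def by auto
    have "y \<in> BB" using Nx.inK[OF d0, of k] k(3) by simp
    moreover have "y \<noteq> d0"
    proof
      assume "y = d0"
      then have "(nxt ^^ k) d0 = (nxt ^^ 0) d0" using k by simp
      then have "k = 0" using Nx.distinct_iter[OF d0, of k 0] k m_def m0 by simp
      then show False using k by simp
    qed
    ultimately show "y \<in> BB \<and> y \<noteq> d0" by simp
  qed
  have qlab: "\<forall>y\<in>set q. \<exists>a\<in>Htil P i. lab D y = Sub i a"
  proof
    fix y assume "y \<in> set q"
    then have "y \<in> BB" using qB by blast
    then have "y \<in> \<Union>C" using B_D by blast
    then show "\<exists>a\<in>Htil P i. lab D y = Sub i a" by (rule labC)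
  qed
  have "set (pw q) \<subseteq> S"
  proof
    fix c assume "c \<in> set (pw q)"
    then obtain y where y: "y \<in> set q" "c \<in> set (lw (lab D y))" unfolding LW_def by auto
    obtain a where a: "a \<in> Htil P i" "lab D y = Sub i a" using qlab y(1) by blast
    have "rep a \<in> a" using rep_Htil[OF a(1)] .
    then have "set (rep a) \<subseteq> S" using Htil_sub[OF a(1)] by blast
    then show "c \<in> S" using y(2) a(2) by (auto simp: lw_def)
  qed
  then have iS: "set (inv_w iv (pw q)) \<subseteq> S" by (rule inv_S)
  have "W (rep a0) (inv_w iv (pw q))" using weq_solve hp a0(2) by (simp add: lw_def)
  then have "inv_w iv (pw q) \<in> a0" using Htil_close[OF a0(1) rep_Htil[OF a0(1)]] iS by blast
  then have "cx (lab D d0) \<le> length (pw q)" using cx_le a0(2) by fastforce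
  also have "length (pw q) = (\<Sum>y\<leftarrow>q. length (lw (lab D y)))"
    unfolding LW_def by (simp add: length_concat o_def)
  also have "\<dots> \<le> (\<Sum>y\<leftarrow>q. 1)"
  proof (rule sum_list_mono)
    fix y assume y: "y \<in> set q"
    obtain a where a: "a \<in> Htil P i" "lab D y = Sub i a" using qlab y by blast
    obtain w where "w \<in> a" using Htil_ne[OF a(1)] by blast
    then have "length (rep a) = cx (Sub i a)" by (rule rep_in(2))
    then have "length (lw (lab D y)) = cx (lab D y)" using a(2) by (simp add: lw_def)
    moreover have "y \<in> BB - {d0}" using qB y by blast
    ultimately show "length (lw (lab D y)) \<le> 1" using oth by simp
  qed
  also have "\<dots> = length q" by (simp add: sum_list_triv)
  also have "length q = m - 1" unfolding q_def by simp
  also have "m \<le> card BB"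
    using Nx.card_orb[OF d0] card_mono[OF B_fin Nx.orb_sub[OF d0]] m_def by simp
  then have "m - 1 \<le> card BB - 1" by simp
  finally show ?thesis .
qed

end



theorem lemma2p5:
  fixes P :: "'s relpres" and D :: "('d, 's) diagram" and C :: "'d set set"
  assumes "wf_relpres P"
    and "van_kampen P D"
    and "cluster P D C"
    and "simply_connected D C"
    and "\<not> complicated D C"
  shows "bd_norm_inf D C \<le> bd_length D C \<and> bd_norm1 D C \<le> 2 * bd_length D C"
proof -
  obtain i F0 where i: "i < nsub P" "Hcell P D i F0" "C = {F'. (F0, F') \<in> (cadj P D i)\<^sup>*}"
    using assms(3) unfolding cluster_def by blast
  interpret rp P i by (rule rp.intro[OF assms(1) i(1)])
  interpret vk P i D C F0 by (rule vk.intro, unfold_locales, rule assms(2), rule i(2), rule i(3))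
  define Ob where "Ob = bd D C \<inter> bd D (inner_faces D)"
  have Ofin: "finite Ob" using B_fin Ob_def by simp
  have Ocard: "card Ob \<le> 1" using assms(5) unfolding complicated_def Ob_def by simp
  have inb: "\<And>d. d \<in> BB - Ob \<Longrightarrow> cx (lab D d) \<le> 1"
  proof -
    fix d assume "d \<in> BB - Ob"
    then have "d \<in> BB" "d \<notin> bd D (inner_faces D)" unfolding Ob_def by auto
    then show "cx (lab D d) \<le> 1" by (rule cx_in)
  qed
  define L where "L = card BB"
  have bnd: "\<forall>d\<in>BB. cx (lab D d) \<le> L" and s1: "(\<Sum>d\<in>BB. cx (lab D d)) \<le> 2 * L"
  proof -
    have "(\<forall>d\<in>BB. cx (lab D d) \<le> L) \<and> (\<Sum>d\<in>BB. cx (lab D d)) \<le> 2 * L"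
    proof (cases "Ob = {}")
      case True
      then have all: "\<forall>d\<in>BB. cx (lab D d) \<le> 1" using inb by blast
      have "(\<Sum>d\<in>BB. cx (lab D d)) \<le> (\<Sum>d\<in>BB. 1)" using all by (intro sum_mono) auto
      then have "(\<Sum>d\<in>BB. cx (lab D d)) \<le> L" unfolding L_def by simp
      moreover have "\<forall>d\<in>BB. cx (lab D d) \<le> L"
      proof
        fix d assume "d \<in> BB"
        then have "BB \<noteq> {}" by blast
        then have "1 \<le> L" unfolding L_def using B_fin by (simp add: Suc_leI card_gt_0_iff)
        then show "cx (lab D d) \<le> L" using all \<open>d \<in> BB\<close> by fastforce
      qed
      ultimately show ?thesis by simp
    next
      case False
      then obtain d0 where "d0 \<in> Ob" by blast
      have "Ob \<subseteq> {d0}"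
      proof
        fix x assume "x \<in> Ob"
        show "x \<in> {d0}"
        proof (rule ccontr)
          assume "x \<notin> {d0}"
          then have xd: "x \<noteq> d0" by simp
          have sub: "{x, d0} \<subseteq> Ob" using \<open>x \<in> Ob\<close> \<open>d0 \<in> Ob\<close> by simp
          have "card {x, d0} = 2" using xd by simp
          moreover have "card {x, d0} \<le> card Ob" by (rule card_mono[OF Ofin sub])
          ultimately have "2 \<le> card Ob" by simp
          then show False using Ocard by simp
        qed
      qed
      then have O1: "Ob = {d0}" using \<open>d0 \<in> Ob\<close> by blast
      have d0: "d0 \<in> BB" using O1 Ob_def by blast
      have oth: "\<forall>d\<in>BB - {d0}. cx (lab D d) \<le> 1" using inb O1 by blast
      have c0: "cx (lab D d0) \<le> L - 1" unfolding L_def by (rule cx_out[OF d0 oth assms(4)])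
      have "BB \<noteq> {}" using d0 by blast
      then have L1: "1 \<le> L" unfolding L_def using B_fin by (simp add: Suc_leI card_gt_0_iff)
      have "(\<Sum>d\<in>BB. cx (lab D d)) = cx (lab D d0) + (\<Sum>d\<in>BB - {d0}. cx (lab D d))"
        by (rule sum.remove[OF B_fin d0])
      have s2: "(\<Sum>d\<in>BB - {d0}. cx (lab D d)) \<le> (\<Sum>d\<in>BB - {d0}. 1)"
        by (rule sum_mono) (use oth in blast)
      have s3: "(\<Sum>d\<in>BB - {d0}. (1::nat)) = L - 1" unfolding L_def using B_fin d0 by simp
      have "(\<Sum>d\<in>BB. cx (lab D d)) \<le> 2 * L"
        using \<open>(\<Sum>d\<in>BB. cx (lab D d)) = _\<close> s2 s3 c0 L1 by linarith
      moreover have "\<forall>d\<in>BB. cx (lab D d) \<le> L"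
      proof
        fix d assume d: "d \<in> BB"
        show "cx (lab D d) \<le> L"
        proof (cases "d = d0")
          case True then show ?thesis using c0 by simp
        next
          case False then have "d \<in> BB - {d0}" using d by simp
          then have "cx (lab D d) \<le> 1" using oth by blast
          then show ?thesis using L1 by simp
        qed
      qed
      ultimately show ?thesis by simp
    qed
    then show "\<forall>d\<in>BB. cx (lab D d) \<le> L" "(\<Sum>d\<in>BB. cx (lab D d)) \<le> 2 * L" by auto
  qed
  have "bd_norm_inf D C \<le> L"
    unfolding bd_norm_inf_def
  proof (rule Max.boundedI)
    show "finite (insert 0 ((\<lambda>d. cx (lab D d)) ` BB))" using B_fin by simp
    show "insert 0 ((\<lambda>d. cx (lab D d)) ` BB) \<noteq> {}" by simp
    fix a assume "a \<in> insert 0 ((\<lambda>d. cx (lab D d)) ` BB)"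
    then show "a \<le> L" using bnd by auto
  qed
  moreover have "bd_norm1 D C \<le> 2 * L" unfolding bd_norm1_def using s1 .
  ultimately show ?thesis unfolding bd_length_def L_def by simp
qed



end
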